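(* Let $G$ be a finitely generated discrete group and let $K$ be a finite subset of $G$. Let $I$ be the two-sided ideal of the group ring $\mathbb{C}G$ generated by $\chi_K$. Then $K$ is an $\mathcal{F}(G)$-Pompeiu set if and only if $I=\mathbb{C}G$.
   Context: Complex-valued functions on $G$ are written as formal sums $f=\sum_{g\in G}a_g g$ with $f(g)=a_g$. $\mathcal{F}(G)$ denotes the set of all complex-valued functions on $G$, and $\mathbb{C}G$ the finitely supported ones, which form a ring under pointwise addition and convolution $f\ast h=\sum_{g\in G}\big(\sum_{x\in G}f(gx^{-1})h(x)\big)g$. For $S\subseteq G$, $\chi_S$ is the characteristic function of $S$. For a class $\mathcal{C}$ of complex-valued functions on $G$ containing $0$, a finite subset $K\subseteq G$ is a $\mathcal{C}$-Pompeiu set if $f=0$ is the only $f\in\mathcal{C}$ satisfying $\sum_{x\in gKh}f(x)=0$ for all $g,h\in G$. *)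

theory Defs
  imports "HOL-Algebra.Group" "HOL-Algebra.Generated_Groups" Complex_Main
begin

definition fun_on :: "('a, 'b) monoid_scheme \<Rightarrow> ('a \<Rightarrow> complex) set" where
  "fun_on G = {f. \<forall>x. x \<notin> carrier G \<longrightarrow> f x = 0}"

definition group_ring :: "('a, 'b) monoid_scheme \<Rightarrow> ('a \<Rightarrow> complex) set" where
  "group_ring G = {f. f \<in> fun_on G \<and> finite {x. f x \<noteq> 0}}"

definition conv :: "('a, 'b) monoid_scheme \<Rightarrow> ('a \<Rightarrow> complex) \<Rightarrow> ('a \<Rightarrow> complex) \<Rightarrow> 'a \<Rightarrow> complex" where
  "conv G f h = (\<lambda>g. if g \<in> carrier G
      then (\<Sum>x\<in>{x \<in> carrier G. h x \<noteq> 0}. f (g \<otimes>\<^bsub>G\<^esub> inv\<^bsub>G\<^esub> x) * h x) else 0)"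

definition char_fun :: "'a set \<Rightarrow> 'a \<Rightarrow> complex" where
  "char_fun S = (\<lambda>x. if x \<in> S then 1 else 0)"

definition two_sided_ideal :: "('a, 'b) monoid_scheme \<Rightarrow> ('a \<Rightarrow> complex) set \<Rightarrow> bool" where
  "two_sided_ideal G I \<longleftrightarrow> I \<subseteq> group_ring G \<and> (\<lambda>_. 0) \<in> I
     \<and> (\<forall>a\<in>I. \<forall>b\<in>I. (\<lambda>x. a x + b x) \<in> I)
     \<and> (\<forall>a\<in>I. (\<lambda>x. - a x) \<in> I)
     \<and> (\<forall>a\<in>I. \<forall>r\<in>group_ring G. conv G r a \<in> I \<and> conv G a r \<in> I)"

definition gen_ideal :: "('a, 'b) monoid_scheme \<Rightarrow> ('a \<Rightarrow> complex) \<Rightarrow> ('a \<Rightarrow> complex) set" where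
  "gen_ideal G f = \<Inter>{I. two_sided_ideal G I \<and> f \<in> I}"

definition pompeiu :: "('a, 'b) monoid_scheme \<Rightarrow> ('a \<Rightarrow> complex) set \<Rightarrow> 'a set \<Rightarrow> bool" where
  "pompeiu G C K \<longleftrightarrow> (\<forall>f\<in>C.
     (\<forall>g\<in>carrier G. \<forall>h\<in>carrier G.
        (\<Sum>x\<in>{g \<otimes>\<^bsub>G\<^esub> k \<otimes>\<^bsub>G\<^esub> h | k. k \<in> K}. f x) = 0)
     \<longrightarrow> (\<forall>x\<in>carrier G. f x = 0))"

definition finitely_generated_group :: "('a, 'b) monoid_scheme \<Rightarrow> bool" where
  "finitely_generated_group G \<longleftrightarrow>
     (\<exists>S. finite S \<and> S \<subseteq> carrier G \<and> generate G S = carrier G)"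

end

theory Submission
  imports Defs "HOL-Library.Function_Algebras"
begin

definition dl :: "'a \<Rightarrow> 'a \<Rightarrow> complex" where "dl a = (\<lambda>y. if y = a then 1 else 0)"
definition scl :: "complex \<Rightarrow> ('a \<Rightarrow> complex) \<Rightarrow> 'a \<Rightarrow> complex" where
  "scl c f = (\<lambda>x. c * f x)"

context group begin

lemma conv_in_ring:
  assumes r: "r \<in> group_ring G" and a: "a \<in> group_ring G"
  shows "conv G r a \<in> group_ring G"
proof -
  let ?Sr = "{x. r x \<noteq> 0}" and ?Sa = "{x. a x \<noteq> 0}"
  have fin: "finite ?Sr" "finite ?Sa" using r a by (auto simp: group_ring_def)
  have "{y. conv G r a y \<noteq> 0} \<subseteq> (\<lambda>(z,x). z \<otimes> x) ` (?Sr \<times> ?Sa)"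
  proof
    fix y assume "y \<in> {y. conv G r a y \<noteq> 0}"
    then have y: "y \<in> carrier G" and s: "(\<Sum>x\<in>{x \<in> carrier G. a x \<noteq> 0}. r (y \<otimes> inv x) * a x) \<noteq> 0"
      by (auto simp: conv_def split: if_splits)
    from sum.not_neutral_contains_not_neutral[OF s] obtain x where
      x: "x \<in> carrier G" "a x \<noteq> 0" "r (y \<otimes> inv x) \<noteq> 0" by auto
    have "y = (y \<otimes> inv x) \<otimes> x" using x y by (simp add: m_assoc)
    then show "y \<in> (\<lambda>(z,x). z \<otimes> x) ` (?Sr \<times> ?Sa)" using x by force
  qed
  then have "finite {y. conv G r a y \<noteq> 0}"
    by (rule finite_subset) (use fin in auto)
  then show ?thesis by (auto simp: group_ring_def fun_on_def conv_def)
qed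

lemma conv_dl_left:
  assumes g: "g \<in> carrier G" and b: "b \<in> group_ring G"
  shows "conv G (scl c (dl g)) b = (\<lambda>y. if y \<in> carrier G then c * b (inv g \<otimes> y) else 0)"
proof (rule ext)
  fix y
  show "conv G (scl c (dl g)) b y = (if y \<in> carrier G then c * b (inv g \<otimes> y) else 0)"
  proof (cases "y \<in> carrier G")
    case True
    have fin: "finite {x \<in> carrier G. b x \<noteq> 0}" using b by (auto simp: group_ring_def)
    have eq: "\<And>x. x \<in> carrier G \<Longrightarrow> (y \<otimes> inv x = g) \<longleftrightarrow> x = inv g \<otimes> y"
      using inv_solve_right'[of g y] inv_solve_left[of _ g y] True g by blast
    have "conv G (scl c (dl g)) b y = (\<Sum>x\<in>{x \<in> carrier G. b x \<noteq> 0}. if x = inv g \<otimes> y then c * b x else 0)"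
      using True by (auto simp: conv_def scl_def dl_def eq intro!: sum.cong)
    also have "\<dots> = c * b (inv g \<otimes> y)"
      using fin b True g by (auto simp: sum.delta' group_ring_def fun_on_def)
    finally show ?thesis using True by simp
  qed (simp add: conv_def)
qed

lemma conv_dl_left1:
  assumes g: "g \<in> carrier G" and b: "b \<in> group_ring G"
  shows "conv G (dl g) b = (\<lambda>y. if y \<in> carrier G then b (inv g \<otimes> y) else 0)"
proof (rule ext)
  fix y
  show "conv G (dl g) b y = (if y \<in> carrier G then b (inv g \<otimes> y) else 0)"
  proof (cases "y \<in> carrier G")
    case True
    have fin: "finite {x \<in> carrier G. b x \<noteq> 0}" using b by (auto simp: group_ring_def)
    have eq: "\<And>x. x \<in> carrier G \<Longrightarrow> (y \<otimes> inv x = g) \<longleftrightarrow> x = inv g \<otimes> y"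
      using inv_solve_right'[of g y] inv_solve_left[of _ g y] True g by blast
    have "conv G (dl g) b y = (\<Sum>x\<in>{x \<in> carrier G. b x \<noteq> 0}. if x = inv g \<otimes> y then b x else 0)"
      using True by (auto simp: conv_def scl_def dl_def eq intro!: sum.cong)
    also have "\<dots> = b (inv g \<otimes> y)"
      using fin b True g by (auto simp: sum.delta' group_ring_def fun_on_def)
    finally show ?thesis using True by simp
  qed (simp add: conv_def)
qed

lemma conv_dl_right:
  assumes h: "h \<in> carrier G"
  shows "conv G b (dl h) = (\<lambda>y. if y \<in> carrier G then b (y \<otimes> inv h) else 0)"
proof -
  have "{x \<in> carrier G. dl h x \<noteq> 0} = {h}" using h by (auto simp: dl_def)
  then show ?thesis by (auto simp: conv_def dl_def fun_eq_iff)
qed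


lemma dl_ring: "x \<in> carrier G \<Longrightarrow> scl c (dl x) \<in> group_ring G"
  by (auto simp: group_ring_def fun_on_def scl_def dl_def)

lemma ring_ideal: "two_sided_ideal G (group_ring G)"
  unfolding two_sided_ideal_def
proof (intro conjI ballI)
  fix a b assume "a \<in> group_ring G" "b \<in> group_ring G"
  then show "(\<lambda>x. a x + b x) \<in> group_ring G"
    by (auto simp: group_ring_def fun_on_def intro: finite_subset[of _ "{x. a x \<noteq> 0} \<union> {x. b x \<noteq> 0}"])
next
  fix a r assume "a \<in> group_ring G" "r \<in> group_ring G"
  then show "conv G r a \<in> group_ring G" "conv G a r \<in> group_ring G" by (auto intro: conv_in_ring)
qed (auto simp: group_ring_def fun_on_def)

lemma ideal_scale:
  assumes J: "two_sided_ideal G J" and b: "b \<in> J"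
  shows "scl c b \<in> J"
proof -
  have br: "b \<in> group_ring G" using J b by (auto simp: two_sided_ideal_def)
  have "conv G (scl c (dl \<one>)) b \<in> J" using J b dl_ring[of \<one> c] by (auto simp: two_sided_ideal_def)
  also have "conv G (scl c (dl \<one>)) b = scl c b"
    using br by (simp add: conv_dl_left[OF one_closed br]) (auto simp: scl_def fun_eq_iff group_ring_def fun_on_def)
  finally show ?thesis .
qed

lemma char_ring: "finite K \<Longrightarrow> K \<subseteq> carrier G \<Longrightarrow> char_fun K \<in> group_ring G"
  by (auto simp: group_ring_def fun_on_def char_fun_def)

lemma translate_in:
  assumes J: "two_sided_ideal G J" and K: "char_fun K \<in> J" "K \<subseteq> carrier G"
    and g: "g \<in> carrier G" and h: "h \<in> carrier G"
  shows "char_fun ((\<lambda>k. g \<otimes> k \<otimes> h) ` K) \<in> J"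
proof -
  have d1: "scl 1 (dl g) \<in> group_ring G" "scl 1 (dl h) \<in> group_ring G" using dl_ring[OF g, of 1] dl_ring[OF h, of 1] by auto
  have sd: "scl 1 f = f" for f :: "'a \<Rightarrow> complex" by (simp add: scl_def)
  have c1: "conv G (char_fun K) (dl h) \<in> J" using J K d1 by (auto simp: two_sided_ideal_def sd)
  then have c1r: "conv G (char_fun K) (dl h) \<in> group_ring G" using J by (auto simp: two_sided_ideal_def)
  have c2: "conv G (scl 1 (dl g)) (conv G (char_fun K) (dl h)) \<in> J" using J c1 d1 by (auto simp: two_sided_ideal_def)
  have "conv G (scl 1 (dl g)) (conv G (char_fun K) (dl h)) = char_fun ((\<lambda>k. g \<otimes> k \<otimes> h) ` K)"
  proof (rule ext)
    fix y
    show "conv G (scl 1 (dl g)) (conv G (char_fun K) (dl h)) y = char_fun ((\<lambda>k. g \<otimes> k \<otimes> h) ` K) y"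
    proof (cases "y \<in> carrier G")
      case True
      have "(inv g \<otimes> y \<otimes> inv h \<in> K) \<longleftrightarrow> y \<in> (\<lambda>k. g \<otimes> k \<otimes> h) ` K"
      proof
        assume "inv g \<otimes> y \<otimes> inv h \<in> K"
        moreover have "y = g \<otimes> (inv g \<otimes> y \<otimes> inv h) \<otimes> h" using g h True by (simp add: m_assoc[symmetric]) (simp add: m_assoc)
        ultimately show "y \<in> (\<lambda>k. g \<otimes> k \<otimes> h) ` K" by blast
      next
        assume "y \<in> (\<lambda>k. g \<otimes> k \<otimes> h) ` K"
        then obtain k where k: "k \<in> K" "y = g \<otimes> k \<otimes> h" by auto
        then have "k \<in> carrier G" using K by auto
        then have "inv g \<otimes> y \<otimes> inv h = k" using k g h by (simp add: m_assoc flip: m_assoc) (simp add: m_assoc)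
        then show "inv g \<otimes> y \<otimes> inv h \<in> K" using k by simp
      qed
      moreover have "y \<otimes> inv h \<otimes> h = y" using True h by (simp add: m_assoc)
      ultimately show ?thesis using True g h c1r
        by (simp add: conv_dl_left conv_dl_right char_fun_def m_assoc)
    next
      case False
      then have "y \<notin> (\<lambda>k. g \<otimes> k \<otimes> h) ` K" using K g h by auto
      then show ?thesis using False by (simp add: conv_def char_fun_def)
    qed
  qed
  then show ?thesis using c2 by simp
qed


lemma reindex_mul:
  fixes F b :: "'a \<Rightarrow> complex"
  assumes x: "x \<in> carrier G" and Y: "finite Y" "Y \<subseteq> carrier G" and S: "S \<subseteq> carrier G"
    and SY: "(\<lambda>z. z \<otimes> x) ` S \<subseteq> Y" and b: "\<And>w. w \<in> carrier G \<Longrightarrow> w \<notin> S \<Longrightarrow> b w = 0"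
  shows "(\<Sum>y\<in>Y. F y * b (y \<otimes> inv x)) = (\<Sum>z\<in>S. F (z \<otimes> x) * b z)"
proof -
  have inj: "inj_on (\<lambda>z. z \<otimes> x) S" using x S by (intro inj_onI) (metis right_cancel subsetD)
  have "(\<Sum>z\<in>S. F (z \<otimes> x) * b z) = (\<Sum>z\<in>S. F (z \<otimes> x) * b ((z \<otimes> x) \<otimes> inv x))"
    using x S by (intro sum.cong) (auto simp: m_assoc subsetD)
  also have "\<dots> = (\<Sum>y\<in>(\<lambda>z. z \<otimes> x) ` S. F y * b (y \<otimes> inv x))"
    using sum.reindex[OF inj, of "\<lambda>y. F y * b (y \<otimes> inv x)"] by simp
  also have "\<dots> = (\<Sum>y\<in>Y. F y * b (y \<otimes> inv x))"
  proof (rule sum.mono_neutral_left[OF Y(1) SY], rule ballI)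
    fix y assume y: "y \<in> Y - (\<lambda>z. z \<otimes> x) ` S"
    then have yc: "y \<in> carrier G" using Y by auto
    have "y = (y \<otimes> inv x) \<otimes> x" using yc x by (simp add: m_assoc)
    then have "y \<otimes> inv x \<notin> S" using y by (metis DiffD2 image_eqI)
    then show "F y * b (y \<otimes> inv x) = 0" using b yc x by simp
  qed
  finally show ?thesis by simp
qed

lemma conv_supp:
  assumes r: "r \<in> group_ring G" and a: "a \<in> group_ring G"
  shows "{y. conv G r a y \<noteq> 0} \<subseteq> (\<lambda>(z,x). z \<otimes> x) ` ({x \<in> carrier G. r x \<noteq> 0} \<times> {x \<in> carrier G. a x \<noteq> 0})"
proof
  fix y assume "y \<in> {y. conv G r a y \<noteq> 0}"
  then have y: "y \<in> carrier G" and s: "(\<Sum>x\<in>{x \<in> carrier G. a x \<noteq> 0}. r (y \<otimes> inv x) * a x) \<noteq> 0"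
    by (auto simp: conv_def split: if_splits)
  from sum.not_neutral_contains_not_neutral[OF s] obtain x where
    x: "x \<in> carrier G" "a x \<noteq> 0" "r (y \<otimes> inv x) \<noteq> 0" by auto
  have "y = (y \<otimes> inv x) \<otimes> x" using x y by (simp add: m_assoc)
  then show "y \<in> (\<lambda>(z,x). z \<otimes> x) ` ({x \<in> carrier G. r x \<noteq> 0} \<times> {x \<in> carrier G. a x \<noteq> 0})"
    using x y by force
qed

lemma supp_eq: "a \<in> group_ring G \<Longrightarrow> {x \<in> carrier G. a x \<noteq> 0} = {x. a x \<noteq> 0}"
  by (auto simp: group_ring_def fun_on_def)

lemma sum_superset:
  assumes "finite S" "{x. a x \<noteq> 0} \<subseteq> S"
  shows "(\<Sum>x\<in>{x. a x \<noteq> 0}. F x * a x) = (\<Sum>x\<in>S. F x * (a x :: complex))"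
  using assms by (intro sum.mono_neutral_left) auto

lemma conv_pair:
  assumes r: "r \<in> group_ring G" and a: "a \<in> group_ring G"
  shows "(\<Sum>y\<in>{y. conv G r a y \<noteq> 0}. F y * conv G r a y)
     = (\<Sum>z\<in>{x. r x \<noteq> 0}. r z * (\<Sum>x\<in>{x. a x \<noteq> 0}. F (z \<otimes> x) * a x))"
proof -
  let ?Sr = "{x \<in> carrier G. r x \<noteq> 0}" and ?Sa = "{x \<in> carrier G. a x \<noteq> 0}"
  let ?Y = "(\<lambda>(z,x). z \<otimes> x) ` (?Sr \<times> ?Sa)"
  have fin: "finite ?Sr" "finite ?Sa" using r a by (auto simp: group_ring_def)
  have Yf: "finite ?Y" using fin by auto
  have Yc: "?Y \<subseteq> carrier G" by auto
  have "(\<Sum>y\<in>{y. conv G r a y \<noteq> 0}. F y * conv G r a y) = (\<Sum>y\<in>?Y. F y * conv G r a y)"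
    by (rule sum_superset[OF Yf conv_supp[OF r a]])
  also have "\<dots> = (\<Sum>y\<in>?Y. F y * (\<Sum>x\<in>?Sa. r (y \<otimes> inv x) * a x))"
    using Yc by (intro sum.cong refl) (auto simp: conv_def)
  also have "\<dots> = (\<Sum>x\<in>?Sa. a x * (\<Sum>y\<in>?Y. F y * r (y \<otimes> inv x)))"
    by (simp add: sum_distrib_left sum.swap[of _ ?Y] mult_ac)
  also have "\<dots> = (\<Sum>x\<in>?Sa. a x * (\<Sum>z\<in>?Sr. F (z \<otimes> x) * r z))"
  proof (rule sum.cong[OF refl])
    fix x assume x: "x \<in> ?Sa"
    have "(\<Sum>y\<in>?Y. F y * r (y \<otimes> inv x)) = (\<Sum>z\<in>?Sr. F (z \<otimes> x) * r z)"
      by (rule reindex_mul[where b=r and F=F]) (use x Yf in auto)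
    then show "a x * (\<Sum>y\<in>?Y. F y * r (y \<otimes> inv x)) = a x * (\<Sum>z\<in>?Sr. F (z \<otimes> x) * r z)" by simp
  qed
  also have "\<dots> = (\<Sum>z\<in>?Sr. r z * (\<Sum>x\<in>?Sa. F (z \<otimes> x) * a x))"
    by (simp add: sum_distrib_left sum.swap[of _ ?Sa] mult_ac)
  finally show ?thesis using supp_eq[OF r] supp_eq[OF a] by simp
qed


lemma gen_ideal_props:
  assumes "char_fun K \<in> group_ring G"
  shows "two_sided_ideal G (gen_ideal G (char_fun K))" "char_fun K \<in> gen_ideal G (char_fun K)"
    "gen_ideal G (char_fun K) \<subseteq> group_ring G"
    "\<And>J. two_sided_ideal G J \<Longrightarrow> char_fun K \<in> J \<Longrightarrow> gen_ideal G (char_fun K) \<subseteq> J"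
proof -
  show sub: "gen_ideal G (char_fun K) \<subseteq> group_ring G"
    using ring_ideal assms by (auto simp: gen_ideal_def)
  show "two_sided_ideal G (gen_ideal G (char_fun K))"
    using sub unfolding two_sided_ideal_def gen_ideal_def by (intro conjI) (simp_all add: two_sided_ideal_def)
  show "char_fun K \<in> gen_ideal G (char_fun K)" by (auto simp: gen_ideal_def)
  show "\<And>J. two_sided_ideal G J \<Longrightarrow> char_fun K \<in> J \<Longrightarrow> gen_ideal G (char_fun K) \<subseteq> J"
    by (auto simp: gen_ideal_def)
qed


lemma pompeiu_if:
  assumes K: "finite K" "K \<subseteq> carrier G" and I: "gen_ideal G (char_fun K) = group_ring G"
  shows "pompeiu G (fun_on G) K"
  unfolding pompeiu_def
proof (intro ballI impI)
  fix f x assume f: "f \<in> fun_on G"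
    and zs: "\<forall>g\<in>carrier G. \<forall>h\<in>carrier G. (\<Sum>x\<in>{g \<otimes> k \<otimes> h | k. k \<in> K}. f x) = 0"
    and x: "x \<in> carrier G"
  define J where "J = {a \<in> group_ring G. \<forall>g\<in>carrier G. \<forall>h\<in>carrier G.
     (\<Sum>x\<in>{x. a x \<noteq> 0}. f (g \<otimes> x \<otimes> h) * a x) = 0}"
  have "two_sided_ideal G J"
    unfolding two_sided_ideal_def
  proof (intro conjI ballI)
    show "J \<subseteq> group_ring G" by (auto simp: J_def)
    show "(\<lambda>_. 0) \<in> J" using ring_ideal by (auto simp: J_def two_sided_ideal_def)
  next
    fix a b assume a: "a \<in> J" and b: "b \<in> J"
    have ar: "a \<in> group_ring G" and br: "b \<in> group_ring G" using a b by (auto simp: J_def)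
    have abr: "(\<lambda>x. a x + b x) \<in> group_ring G" using ring_ideal ar br by (auto simp: two_sided_ideal_def)
    let ?S = "{x. a x \<noteq> 0} \<union> {x. b x \<noteq> 0}"
    have fS: "finite ?S" using ar br by (auto simp: group_ring_def)
    show "(\<lambda>x. a x + b x) \<in> J"
      unfolding J_def
    proof (intro CollectI conjI ballI abr)
      fix g h assume g: "g \<in> carrier G" and h: "h \<in> carrier G"
      have "(\<Sum>x\<in>{x. a x + b x \<noteq> 0}. f (g \<otimes> x \<otimes> h) * (a x + b x))
          = (\<Sum>x\<in>?S. f (g \<otimes> x \<otimes> h) * (a x + b x))"
        by (rule sum_superset[OF fS]) auto
      also have "\<dots> = (\<Sum>x\<in>?S. f (g \<otimes> x \<otimes> h) * a x) + (\<Sum>x\<in>?S. f (g \<otimes> x \<otimes> h) * b x)"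
        by (simp add: algebra_simps sum.distrib)
      also have "\<dots> = (\<Sum>x\<in>{x. a x \<noteq> 0}. f (g \<otimes> x \<otimes> h) * a x) + (\<Sum>x\<in>{x. b x \<noteq> 0}. f (g \<otimes> x \<otimes> h) * b x)"
        using sum_superset[OF fS, of a] sum_superset[OF fS, of b] by auto
      also have "\<dots> = 0" using a b g h by (auto simp: J_def)
      finally show "(\<Sum>x\<in>{x. a x + b x \<noteq> 0}. f (g \<otimes> x \<otimes> h) * (a x + b x)) = 0" .
    qed
  next
    fix a assume a: "a \<in> J"
    have ar: "a \<in> group_ring G" using a by (auto simp: J_def)
    have nr: "(\<lambda>x. - a x) \<in> group_ring G" using ring_ideal ar by (auto simp: two_sided_ideal_def)
    show "(\<lambda>x. - a x) \<in> J" using a nr by (auto simp: J_def sum_negf)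
  next
    fix a r assume a: "a \<in> J" and r: "r \<in> group_ring G"
    have ar: "a \<in> group_ring G" using a by (auto simp: J_def)
    have aS: "\<And>x. a x \<noteq> 0 \<Longrightarrow> x \<in> carrier G" and rS: "\<And>x. r x \<noteq> 0 \<Longrightarrow> x \<in> carrier G"
      using ar r by (auto simp: group_ring_def fun_on_def)
    show "conv G r a \<in> J"
      unfolding J_def
    proof (intro CollectI conjI ballI conv_in_ring r ar)
      fix g h assume g: "g \<in> carrier G" and h: "h \<in> carrier G"
      have "(\<Sum>y\<in>{y. conv G r a y \<noteq> 0}. f (g \<otimes> y \<otimes> h) * conv G r a y)
        = (\<Sum>z\<in>{x. r x \<noteq> 0}. r z * (\<Sum>x\<in>{x. a x \<noteq> 0}. f (g \<otimes> (z \<otimes> x) \<otimes> h) * a x))"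
        by (rule conv_pair[OF r ar])
      also have "\<dots> = (\<Sum>z\<in>{x. r x \<noteq> 0}. r z * (\<Sum>x\<in>{x. a x \<noteq> 0}. f ((g \<otimes> z) \<otimes> x \<otimes> h) * a x))"
        using g aS rS by (intro sum.cong refl arg_cong2[where f="(*)"]) (simp_all add: m_assoc)
      also have "\<dots> = 0" using a g h rS by (auto simp: J_def intro!: sum.neutral)
      finally show "(\<Sum>y\<in>{y. conv G r a y \<noteq> 0}. f (g \<otimes> y \<otimes> h) * conv G r a y) = 0" .
    qed
    show "conv G a r \<in> J"
      unfolding J_def
    proof (intro CollectI conjI ballI conv_in_ring r ar)
      fix g h assume g: "g \<in> carrier G" and h: "h \<in> carrier G"
      have "(\<Sum>y\<in>{y. conv G a r y \<noteq> 0}. f (g \<otimes> y \<otimes> h) * conv G a r y)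
        = (\<Sum>z\<in>{x. a x \<noteq> 0}. a z * (\<Sum>x\<in>{x. r x \<noteq> 0}. f (g \<otimes> (z \<otimes> x) \<otimes> h) * r x))"
        by (rule conv_pair[OF ar r])
      also have "\<dots> = (\<Sum>x\<in>{x. r x \<noteq> 0}. r x * (\<Sum>z\<in>{x. a x \<noteq> 0}. f (g \<otimes> z \<otimes> (x \<otimes> h)) * a z))"
        using g h aS rS by (simp add: sum_distrib_left sum.swap[of _ "{x. a x \<noteq> 0}"] mult_ac m_assoc)
      also have "\<dots> = 0" using a g h rS by (auto simp: J_def intro!: sum.neutral)
      finally show "(\<Sum>y\<in>{y. conv G a r y \<noteq> 0}. f (g \<otimes> y \<otimes> h) * conv G a r y) = 0" .
    qed
  qed
  moreover have "char_fun K \<in> J"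
    unfolding J_def
  proof (intro CollectI conjI ballI char_ring K)
    fix g h assume g: "g \<in> carrier G" and h: "h \<in> carrier G"
    have inj: "inj_on (\<lambda>k. g \<otimes> k \<otimes> h) K" using g h K(2)
      by (intro inj_onI) (auto simp: subset_iff Units_eq)
    have "{x. char_fun K x \<noteq> 0} = K" by (auto simp: char_fun_def)
    then have "(\<Sum>x\<in>{x. char_fun K x \<noteq> 0}. f (g \<otimes> x \<otimes> h) * char_fun K x) = (\<Sum>k\<in>K. f (g \<otimes> k \<otimes> h))"
      by (simp add: char_fun_def)
    also have "\<dots> = (\<Sum>y\<in>(\<lambda>k. g \<otimes> k \<otimes> h) ` K. f y)" using sum.reindex[OF inj, of f] by simp
    also have "(\<lambda>k. g \<otimes> k \<otimes> h) ` K = {g \<otimes> k \<otimes> h | k. k \<in> K}" by auto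
    finally show "(\<Sum>x\<in>{x. char_fun K x \<noteq> 0}. f (g \<otimes> x \<otimes> h) * char_fun K x) = 0" using zs g h by simp
  qed
  ultimately have "gen_ideal G (char_fun K) \<subseteq> J" using gen_ideal_props(4)[OF char_ring[OF K]] by blast
  then have "dl x \<in> J" using I dl_ring[OF x, of 1] by (auto simp: scl_def)
  then have "(\<Sum>y\<in>{y. dl x y \<noteq> 0}. f (\<one> \<otimes> y \<otimes> \<one>) * dl x y) = 0" by (auto simp: J_def)
  moreover have "{y. dl x y \<noteq> 0} = {x}" by (auto simp: dl_def)
  ultimately show "f x = 0" using x by (simp add: dl_def)
qed


end

lemma vs_scl: "vector_space scl"
  by unfold_locales (auto simp: scl_def fun_eq_iff algebra_simps)

lemma vs_mult: "vector_space ((*) :: complex \<Rightarrow> complex \<Rightarrow> complex)"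
  by unfold_locales (auto simp: algebra_simps)

global_interpretation VP: vector_space_pair "scl" "(*) :: complex \<Rightarrow> complex \<Rightarrow> complex"
  using vs_scl vs_mult by (simp add: vector_space_pair_def)

lemma sum_fun_apply: "(sum f A) x = sum (\<lambda>a. f a x) A"
  by (induction A rule: infinite_finite_induct) auto

context group begin

lemma ideal_if:
  assumes K: "finite K" "K \<subseteq> carrier G" and P: "pompeiu G (fun_on G) K"
  shows "gen_ideal G (char_fun K) = group_ring G"
proof (rule ccontr)
  let ?I = "gen_ideal G (char_fun K)"
  note props = gen_ideal_props[OF char_ring[OF K]]
  assume "?I \<noteq> group_ring G"
  with props(3) obtain a where a: "a \<in> group_ring G" "a \<notin> ?I" by blast
  have sub: "VP.vs1.subspace ?I"
  proof (rule VP.vs1.subspaceI)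
    show "0 \<in> ?I" using props(1) by (simp add: two_sided_ideal_def zero_fun_def)
    show "x + y \<in> ?I" if "x \<in> ?I" "y \<in> ?I" for x y
      using props(1) that by (simp add: two_sided_ideal_def plus_fun_def)
    show "scl c x \<in> ?I" if "x \<in> ?I" for c x
      using ideal_scale[OF props(1) that] .
  qed
  obtain B where B: "B \<subseteq> ?I" "VP.vs1.independent B" "?I \<subseteq> VP.vs1.span B"
    using VP.vs1.maximal_independent_subset by blast
  have e: "VP.vs1.span ?I = ?I" using sub by simp
  have "VP.vs1.span B \<subseteq> ?I"
    using VP.vs1.span_mono[OF B(1)] unfolding e .
  then have aB: "a \<notin> VP.vs1.span B" using a by blast
  have ind: "VP.vs1.independent (insert a B)" using VP.vs1.independent_insertI[OF aB B(2)] .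
  obtain phi where phi: "Vector_Spaces.linear scl (*) phi"
    and pv: "\<forall>x\<in>insert a B. phi x = (if x = a then 1 else 0)"
    using VP.linear_independent_extend[OF ind, of "\<lambda>x. if x = a then 1 else 0"] by blast
  have aB': "a \<notin> B" using a B(1) by blast
  have pB: "\<And>x. x \<in> B \<Longrightarrow> phi x = 0" using pv aB' by auto
  have phi0: "phi x = 0" if "x \<in> ?I" for x
    using VP.linear_eq_0_on_span[OF phi, of B x, OF pB] B(3) that by blast
  define F where "F = (\<lambda>x. if x \<in> carrier G then phi (dl x) else 0)"
  have Ff: "F \<in> fun_on G" by (simp add: F_def fun_on_def)
  have Fs: "\<forall>g\<in>carrier G. \<forall>h\<in>carrier G. (\<Sum>x\<in>{g \<otimes> k \<otimes> h | k. k \<in> K}. F x) = 0"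
  proof (intro ballI)
    fix g h assume g: "g \<in> carrier G" and h: "h \<in> carrier G"
    let ?T = "(\<lambda>k. g \<otimes> k \<otimes> h) ` K"
    have T: "{g \<otimes> k \<otimes> h | k. k \<in> K} = ?T" by auto
    have Tc: "?T \<subseteq> carrier G" using K g h by auto
    have fT: "finite ?T" using K by simp
    have "(\<Sum>x\<in>?T. F x) = (\<Sum>x\<in>?T. phi (dl x))" using Tc by (intro sum.cong) (auto simp: F_def)
    also have "\<dots> = phi (\<Sum>x\<in>?T. dl x)" using VP.linear_sum[OF phi, of dl ?T] by simp
    also have "(\<Sum>x\<in>?T. dl x) = char_fun ?T"
    proof (rule ext)
      fix y
      have "(\<Sum>x\<in>?T. dl x) y = (\<Sum>x\<in>?T. if y = x then 1 else 0)"
        unfolding sum_fun_apply dl_def by (rule sum.cong) auto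
      also have "\<dots> = (if y \<in> ?T then 1 else 0)" by (rule sum.delta'[OF fT])
      finally show "(\<Sum>x\<in>?T. dl x) y = char_fun ?T y" by (simp only: char_fun_def)
    qed
    also have "phi (char_fun ?T) = 0"
      using phi0 translate_in[OF props(1) props(2) K(2) g h] by blast
    finally show "(\<Sum>x\<in>{g \<otimes> k \<otimes> h | k. k \<in> K}. F x) = 0" using T by simp
  qed
  have F0: "\<forall>x\<in>carrier G. F x = 0"
    using P Ff Fs unfolding pompeiu_def by blast
  let ?Sa = "{x. a x \<noteq> 0}"
  have fSa: "finite ?Sa" and Sac: "?Sa \<subseteq> carrier G" using a by (auto simp: group_ring_def fun_on_def)
  have aeq: "a = (\<Sum>x\<in>?Sa. scl (a x) (dl x))"
  proof (rule ext)
    fix y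
    have "(\<Sum>x\<in>?Sa. scl (a x) (dl x)) y = (\<Sum>x\<in>?Sa. if y = x then a x else 0)"
      by (auto simp: sum_fun_apply scl_def dl_def intro!: sum.cong)
    also have "\<dots> = a y" using fSa by (simp add: sum.delta)
    finally show "a y = (\<Sum>x\<in>?Sa. scl (a x) (dl x)) y" by simp
  qed
  have "phi a = phi (\<Sum>x\<in>?Sa. scl (a x) (dl x))" using aeq by (rule arg_cong)
  also have "\<dots> = (\<Sum>x\<in>?Sa. phi (scl (a x) (dl x)))" by (rule VP.linear_sum[OF phi])
  also have "\<dots> = (\<Sum>x\<in>?Sa. a x * phi (dl x))" by (simp add: VP.linear_scale[OF phi])
  also have "\<dots> = (\<Sum>x\<in>?Sa. a x * F x)" using Sac by (intro sum.cong) (auto simp: F_def)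
  also have "\<dots> = 0"
  proof (rule sum.neutral, rule ballI)
    fix x assume "x \<in> ?Sa"
    then have "x \<in> carrier G" using Sac by blast
    then have "F x = 0" using F0 by blast
    then show "a x * F x = 0" by simp
  qed
  finally have "phi a = 0" .
  moreover have "phi a = 1" using bspec[OF pv insertI1] by simp
  ultimately show False by simp
qed

end

theorem theorem1:
  fixes G :: "('a, 'b) monoid_scheme" and K :: "'a set"
  assumes "group G" and "finitely_generated_group G"
    and "finite K" and "K \<subseteq> carrier G"
  shows "pompeiu G (fun_on G) K \<longleftrightarrow> gen_ideal G (char_fun K) = group_ring G"
proof
  assume "pompeiu G (fun_on G) K"
  then show "gen_ideal G (char_fun K) = group_ring G" by (rule group.ideal_if[OF assms(1,3,4)])
next
  assume "gen_ideal G (char_fun K) = group_ring G"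
  then show "pompeiu G (fun_on G) K" by (rule group.pompeiu_if[OF assms(1,3,4)])
qed

end
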